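(* Let $I\subset[0,+\infty)$ be an open interval, $\beta\in\{-1,1\}$, $t_0\in I$, $T>0$ with $t_0+\beta T\in I$, $\kappa,\mu\in\,]-1,+\infty[$, and let the noise $\varpi$ be a Poisson process with intensity $\nu>0$. Then: (i) if $n\ge 2$, for every $N\ge n$ and $\xi\in[0,1]$, $E\big[e^{\mu,\kappa}_{\varpi,\beta T,N,\xi}(t_0)\big]=0$; (ii) if $n=1$, $E\big[e^{\mu,\kappa}_{\varpi,\beta T}(t_0)\big]=\nu$ and, for every $\xi\in[0,1]$, $E\big[e^{\mu,\kappa}_{\varpi,\beta T,2,\xi}(t_0)\big]=\nu$.
   Context: A Poisson process $\{N(t),t\ge0\}$ with intensity $\nu$ has $E[N(t)]=\nu t$ and $\mathrm{Cov}[N(t),N(s)]=\nu\min(t,s)$. For $a,b>-1$ let $w^{a,b}(t)=t^{b}(1-t)^{a}$, $P_k^{a,b}(t)=\sum_{s=0}^{k}\binom{k+a}{s}\binom{k+b}{k-s}(t-1)^{k-s}t^{s}$, $\|P_k^{a,b}\|^2=\int_0^1 w^{a,b}(P_k^{a,b})^2$, and $B$ the Beta function. For $n\in\mathbb{N}$, $N\ge n$, $q=N-n$, $\xi\in[0,1]$, the Jacobi estimator kernel is $$p_{\beta T,n,N,\xi}^{\mu,\kappa}(\tau)=\frac{(-1)^n}{(\beta T)^n}\sum_{i=0}^{q}\frac{P_i^{\mu+n,\kappa+n}(\xi)}{\|P_i^{\mu+n,\kappa+n}\|^2}\frac{d^n}{d\tau^n}\Big[w^{\mu+n,\kappa+n}(\tau)P_i^{\mu+n,\kappa+n}(\tau)\Big],$$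 and its noise error contribution is $e^{\mu,\kappa}_{\varpi,\beta T,N,\xi}(t_0)=\int_0^1 p_{\beta T,n,N,\xi}^{\mu,\kappa}(\tau)\varpi(t_0+\beta T\tau)d\tau$ (mean-square integral). For $n=1$: the minimal estimator has kernel $p^{\mu,\kappa}_{\beta T}(\tau)=\frac{1}{\beta T}\frac{\Gamma(\mu+\kappa+4)}{\Gamma(\kappa+2)\Gamma(\mu+2)}\big((\mu+\kappa+2)\tau-(\kappa+1)\big)(1-\tau)^{\mu}\tau^{\kappa}$ and noise error contribution $e^{\mu,\kappa}_{\varpi,\beta T}(t_0)=\int_0^1p^{\mu,\kappa}_{\beta T}(\tau)\varpi(t_0+\beta T\tau)d\tau$; the affine estimator with $N=2$ has kernel $p^{\mu,\kappa}_{\beta T,2,\xi}=\lambda_1 p^{\mu+1,\kappa}_{\beta T}+\lambda_0p^{\mu,\kappa+1}_{\beta T}$ with $\lambda_1=(\kappa+3)-(\mu+\kappa+5)\xi$, $\lambda_0=1-\lambda_1$, and noise error contribution $e^{\mu,\kappa}_{\varpi,\beta T,2,\xi}(t_0)=\int_0^1p^{\mu,\kappa}_{\beta T,2,\xi}(\tau)\varpi(t_0+\beta T\tau)d\tau$. *)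

theory Defs
  imports "HOL-Probability.Probability"
begin

definition poisson_process :: "'a measure \<Rightarrow> real \<Rightarrow> (real \<Rightarrow> 'a \<Rightarrow> real) \<Rightarrow> bool" where
  "poisson_process M \<nu> N \<longleftrightarrow>
     prob_space M \<and> \<nu> > 0 \<and>
     (\<forall>t\<ge>0. N t \<in> borel_measurable M) \<and>
     (\<forall>\<omega>\<in>space M. N 0 \<omega> = 0) \<and>
     (\<forall>\<omega>\<in>space M. mono_on {0..} (\<lambda>t. N t \<omega>) \<and>
        (\<forall>t\<ge>0. continuous (at_right t) (\<lambda>t. N t \<omega>))) \<and>
     (\<forall>s t (k::nat). 0 \<le> s \<and> s \<le> t \<longrightarrow>
        measure M {\<omega>\<in>space M. N t \<omega> - N s \<omega> = real k}
          = (\<nu> * (t - s)) ^ k / fact k * exp (- (\<nu> * (t - s)))) \<and>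
     (\<forall>(ts::nat \<Rightarrow> real) n. 0 \<le> ts 0 \<and> mono ts \<longrightarrow>
        prob_space.indep_vars M (\<lambda>_. borel) (\<lambda>i \<omega>. N (ts (Suc i)) \<omega> - N (ts i) \<omega>) {..<n})"

definition jw :: "real \<Rightarrow> real \<Rightarrow> real \<Rightarrow> real" where
  "jw a b t = t powr b * (1 - t) powr a"

definition jacP :: "nat \<Rightarrow> real \<Rightarrow> real \<Rightarrow> real \<Rightarrow> real" where
  "jacP k a b t = (\<Sum>s=0..k. ((real k + a) gchoose s) * ((real k + b) gchoose (k - s))
                       * (t - 1) ^ (k - s) * t ^ s)"

definition jac_norm2 :: "nat \<Rightarrow> real \<Rightarrow> real \<Rightarrow> real" where
  "jac_norm2 k a b = (LINT t:{0..1}|lborel. jw a b t * (jacP k a b t)^2)"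

definition jacobi_kernel :: "real \<Rightarrow> real \<Rightarrow> real \<Rightarrow> nat \<Rightarrow> nat \<Rightarrow> real \<Rightarrow> real \<Rightarrow> real" where
  "jacobi_kernel \<mu> \<kappa> h n N \<xi> \<tau> =
     (-1) ^ n / h ^ n *
     (\<Sum>i=0..N - n. jacP i (\<mu> + real n) (\<kappa> + real n) \<xi> / jac_norm2 i (\<mu> + real n) (\<kappa> + real n)
        * (deriv ^^ n) (\<lambda>s. jw (\<mu> + real n) (\<kappa> + real n) s * jacP i (\<mu> + real n) (\<kappa> + real n) s) \<tau>)"

definition min_kernel :: "real \<Rightarrow> real \<Rightarrow> real \<Rightarrow> real \<Rightarrow> real" where
  "min_kernel \<mu> \<kappa> h \<tau> =
     1 / h * (Gamma (\<mu> + \<kappa> + 4) / (Gamma (\<kappa> + 2) * Gamma (\<mu> + 2)))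
       * ((\<mu> + \<kappa> + 2) * \<tau> - (\<kappa> + 1)) * (1 - \<tau>) powr \<mu> * \<tau> powr \<kappa>"

definition aff_kernel :: "real \<Rightarrow> real \<Rightarrow> real \<Rightarrow> real \<Rightarrow> real \<Rightarrow> real" where
  "aff_kernel \<mu> \<kappa> h \<xi> \<tau> =
     (let l1 = (\<kappa> + 3) - (\<mu> + \<kappa> + 5) * \<xi>; l0 = 1 - l1
      in l1 * min_kernel (\<mu> + 1) \<kappa> h \<tau> + l0 * min_kernel \<mu> (\<kappa> + 1) h \<tau>)"

text \<open>Noise error contribution: integral over [0,1] of kernel(tau) * noise(t0 + h tau),
  taken pathwise (agrees a.s. with the mean-square integral for the processes considered).\<close>
definition noise_err :: "(real \<Rightarrow> real) \<Rightarrow> (real \<Rightarrow> 'a \<Rightarrow> real) \<Rightarrow> real \<Rightarrow> real \<Rightarrow> 'a \<Rightarrow> real" where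
  "noise_err p X h t0 \<omega> = (LINT \<tau>:{0..1}|lborel. p \<tau> * X (t0 + h * \<tau>) \<omega>)"

end

theory Submission imports Defs "HOL-Real_Asymp.Real_Asymp" "HOL-Computational_Algebra.Polynomial" begin

lemma pp_basic:
  assumes "poisson_process M \<nu> W"
  shows "prob_space M" "\<nu> > 0" "\<And>t. t \<ge> 0 \<Longrightarrow> W t \<in> borel_measurable M"
    "\<And>t \<omega>. t \<ge> 0 \<Longrightarrow> \<omega> \<in> space M \<Longrightarrow> W t \<omega> \<ge> 0"
    "\<And>t k. t \<ge> 0 \<Longrightarrow> measure M {\<omega>\<in>space M. W t \<omega> = real k} = (\<nu> * t) ^ k / fact k * exp (- (\<nu> * t))"
    "\<And>t \<omega>. t \<ge> 0 \<Longrightarrow> \<omega> \<in> space M \<Longrightarrow> continuous (at_right t) (\<lambda>t. W t \<omega>)"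
proof -
  note D = assms[unfolded poisson_process_def]
  show "prob_space M" "\<nu> > 0" "\<And>t. t \<ge> 0 \<Longrightarrow> W t \<in> borel_measurable M" using D by auto
  show "\<And>t \<omega>. t \<ge> 0 \<Longrightarrow> \<omega> \<in> space M \<Longrightarrow> continuous (at_right t) (\<lambda>t. W t \<omega>)" using D by auto
  show "W t \<omega> \<ge> 0" if "t \<ge> 0" "\<omega> \<in> space M" for t \<omega>
  proof -
    have "mono_on {0..} (\<lambda>t. W t \<omega>)" "W 0 \<omega> = 0" using D that by auto
    then show ?thesis using that by (metis atLeast_iff mono_onD order_refl)
  qed
  show "measure M {\<omega>\<in>space M. W t \<omega> = real k} = (\<nu> * t) ^ k / fact k * exp (- (\<nu> * t))"
    if "t \<ge> 0" for t k
  proof -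
    have "measure M {\<omega>\<in>space M. W t \<omega> - W 0 \<omega> = real k} = (\<nu> * (t - 0)) ^ k / fact k * exp (- (\<nu> * (t - 0)))"
      using D that by blast
    moreover have "{\<omega>\<in>space M. W t \<omega> - W 0 \<omega> = real k} = {\<omega>\<in>space M. W t \<omega> = real k}"
      using D by auto
    ultimately show ?thesis by simp
  qed
qed

lemma poisson_sums:
  fixes x :: real
  shows "(\<lambda>k. x ^ k / fact k * exp (- x)) sums 1"
    "(\<lambda>k. real k * (x ^ k / fact k * exp (- x))) sums x"
proof -
  have e: "(\<lambda>n. x ^ n / fact n) sums exp x"
    using exp_converges[of x] by (simp add: divide_inverse mult.commute)
  from sums_mult2[OF e, of "exp (-x)"] show "(\<lambda>k. x ^ k / fact k * exp (- x)) sums 1"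
    by (simp add: exp_minus field_simps)
  have "(\<lambda>n. x * exp (-x) * (x ^ n / fact n)) sums (x * exp (-x) * exp x)"
    by (rule sums_mult[OF e])
  moreover have "real (Suc n) * (x ^ Suc n / fact (Suc n) * exp (- x)) = x * exp (-x) * (x ^ n / fact n)" for n
    by (simp add: fact_Suc field_simps del: of_nat_Suc)
  ultimately have "(\<lambda>n. real (Suc n) * (x ^ Suc n / fact (Suc n) * exp (- x))) sums x"
    by (simp add: exp_minus mult_ac)
  from sums_Suc[OF this] show "(\<lambda>k. real k * (x ^ k / fact k * exp (- x))) sums x" by simp
qed

lemma pp_expect:
  assumes P: "poisson_process M \<nu> W" and t: "t \<ge> 0"
  shows "integrable M (W t)" "(\<integral>\<omega>. W t \<omega> \<partial>M) = \<nu> * t"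
proof -
  interpret prob_space M using pp_basic(1)[OF P] .
  have meas[measurable]: "W t \<in> borel_measurable M" using pp_basic(3)[OF P t] .
  have nn: "\<And>\<omega>. \<omega> \<in> space M \<Longrightarrow> W t \<omega> \<ge> 0" using pp_basic(4)[OF P t] by auto
  define x where "x = \<nu> * t"
  have x0: "x \<ge> 0" using pp_basic(2)[OF P] t by (simp add: x_def)
  define A where "A k = {\<omega>\<in>space M. W t \<omega> = real k}" for k :: nat
  have Asets: "A k \<in> sets M" for k unfolding A_def by measurable
  have disj: "disjoint_family A" unfolding disjoint_family_on_def A_def by auto
  have pA: "measure M (A k) = x ^ k / fact k * exp (- x)" for k
    using pp_basic(5)[OF P t] by (simp add: A_def x_def)
  have "(\<lambda>k. measure M (A k)) sums measure M (\<Union>k. A k)"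
    by (rule measure_UNION) (use Asets disj in auto)
  then have "measure M (\<Union>k. A k) = 1"
    using poisson_sums(1)[of x] by (simp add: pA sums_unique2)
  then have AE: "AE \<omega> in M. \<omega> \<in> (\<Union>k. A k)"
    using AE_in_set_eq_1 Asets by blast
  have "AE \<omega> in M. ennreal (W t \<omega>) = (\<Sum>k. ennreal (real k) * indicator (A k) \<omega>)"
    using AE
  proof eventually_elim
    case (elim \<omega>)
    then obtain j where j: "\<omega> \<in> A j" by auto
    then have "W t \<omega> = real j" by (simp add: A_def)
    then show ?case using suminf_cmult_indicator[OF disj j, of "\<lambda>k. ennreal (real k)"] by simp
  qed
  then have "(\<integral>\<^sup>+\<omega>. ennreal (W t \<omega>) \<partial>M) = (\<integral>\<^sup>+\<omega>. (\<Sum>k. ennreal (real k) * indicator (A k) \<omega>) \<partial>M)"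
    by (rule nn_integral_cong_AE)
  also have "\<dots> = (\<Sum>k. (\<integral>\<^sup>+\<omega>. ennreal (real k) * indicator (A k) \<omega> \<partial>M))"
    by (rule nn_integral_suminf) (use Asets in auto)
  also have "\<dots> = (\<Sum>k. ennreal (real k * (x ^ k / fact k * exp (- x))))"
    using Asets x0 by (simp add: nn_integral_cmult_indicator emeasure_eq_measure pA ennreal_mult[symmetric])
  also have "\<dots> = ennreal x"
    by (rule suminf_ennreal_eq[OF _ poisson_sums(2)]) (use x0 in auto)
  finally have nnI: "(\<integral>\<^sup>+\<omega>. ennreal (W t \<omega>) \<partial>M) = ennreal x" .
  show "integrable M (W t)"
    by (rule integrableI_nonneg) (use nn nnI in auto)
  have "(\<integral>\<omega>. W t \<omega> \<partial>M) = enn2real (ennreal x)"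
    by (subst integral_eq_nn_integral) (use nn nnI in auto)
  then show "(\<integral>\<omega>. W t \<omega> \<partial>M) = \<nu> * t" using x0 by (simp add: x_def)
qed

lemma dyadic_right:
  fixes s :: real
  assumes "s \<ge> 0"
  shows "filterlim (\<lambda>m::nat. (real_of_int \<lfloor>s * 2 ^ m\<rfloor> + 1) / 2 ^ m) (at_right s) sequentially"
proof -
  let ?r = "\<lambda>m::nat. (real_of_int \<lfloor>s * 2 ^ m\<rfloor> + 1) / 2 ^ m"
  have lo: "s < ?r m" for m
  proof -
    have "s * 2 ^ m < real_of_int \<lfloor>s * 2 ^ m\<rfloor> + 1" by linarith
    then show ?thesis by (simp add: field_simps)
  qed
  have hi: "?r m \<le> s + 1 / 2 ^ m" for m
  proof -
    have "real_of_int \<lfloor>s * 2 ^ m\<rfloor> + 1 \<le> s * 2 ^ m + 1" by linarith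
    then show ?thesis by (simp add: field_simps)
  qed
  have l1: "(\<lambda>m::nat. s + 1 / 2 ^ m) \<longlonglongrightarrow> s" by real_asymp
  have "?r \<longlonglongrightarrow> s"
    by (rule tendsto_sandwich[OF _ _ tendsto_const l1]) (use lo hi in \<open>auto intro!: always_eventually less_imp_le\<close>)
  moreover have "?r m \<noteq> s" for m using lo[of m] by simp
  ultimately show ?thesis unfolding filterlim_at using lo by (auto intro!: always_eventually)
qed

lemma pp_joint:
  assumes P: "poisson_process M \<nu> W"
  shows "(\<lambda>x. W (max 0 (fst x)) (snd x)) \<in> borel_measurable (borel \<Otimes>\<^sub>M M)"
proof (rule borel_measurable_LIMSEQ_real)
  let ?r = "\<lambda>m::nat. \<lambda>s::real. (real_of_int \<lfloor>s * 2 ^ m\<rfloor> + 1) / 2 ^ m"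
  show "(\<lambda>m. W (?r m (max 0 (fst x))) (snd x)) \<longlonglongrightarrow> W (max 0 (fst x)) (snd x)"
    if "x \<in> space (borel \<Otimes>\<^sub>M M)" for x
  proof -
    have sx: "snd x \<in> space M" using that by (auto simp: space_pair_measure)
    have c: "continuous (at_right (max 0 (fst x))) (\<lambda>t. W t (snd x))"
      using pp_basic(6)[OF P _ sx] by simp
    have "((\<lambda>t. W t (snd x)) \<longlongrightarrow> W (max 0 (fst x)) (snd x)) (at_right (max 0 (fst x)))"
      using c by (simp add: continuous_within)
    from filterlim_compose[OF this dyadic_right] show ?thesis by simp
  qed
  show "(\<lambda>x. W (?r m (max 0 (fst x))) (snd x)) \<in> borel_measurable (borel \<Otimes>\<^sub>M M)" for m
  proof -
    have "(\<lambda>x. W (max 0 ((real_of_int k + 1) / 2 ^ m)) (snd x)) \<in> borel_measurable (borel \<Otimes>\<^sub>M M)" for k :: int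
    proof -
      have "W (max 0 ((real_of_int k + 1) / 2 ^ m)) \<in> borel_measurable M"
        using pp_basic(3)[OF P] by simp
      then show ?thesis by measurable
    qed
    moreover have "(\<lambda>x::real\<times>'a. \<lfloor>max 0 (fst x) * (2::real) ^ m\<rfloor>) \<in> measurable (borel \<Otimes>\<^sub>M M) (count_space UNIV)"
      by measurable
    ultimately have "(\<lambda>x::real\<times>'a. W (max 0 ((real_of_int \<lfloor>max 0 (fst x) * (2::real) ^ m\<rfloor> + 1) / 2 ^ m)) (snd x)) \<in> borel_measurable (borel \<Otimes>\<^sub>M M)"
      by (rule measurable_compose_countable)
    moreover have "max 0 ((real_of_int \<lfloor>max 0 (fst x) * 2 ^ m\<rfloor> + 1) / 2 ^ m) = ?r m (max 0 (fst x))" for x :: "real \<times> 'a"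
    proof -
      have "0 \<le> real_of_int \<lfloor>max 0 (fst x) * 2 ^ m\<rfloor>" by simp
      then show ?thesis by (intro max_absorb2) simp
    qed
    ultimately show ?thesis by simp
  qed
qed

lemma pp_noise_expect:
  assumes P: "poisson_process M \<nu> W" and t0: "t0 \<ge> 0" "t0 + h \<ge> 0"
    and p: "set_integrable lborel {0..1} p"
  shows "(\<integral>\<omega>. noise_err p W h t0 \<omega> \<partial>M)
           = \<nu> * (t0 * integral {0..1} p + h * integral {0..1} (\<lambda>\<tau>. \<tau> * p \<tau>))"
proof -
  interpret prob_space M using pp_basic(1)[OF P] .
  interpret PS: pair_sigma_finite lborel M
    by (simp add: pair_sigma_finite_def lborel.sigma_finite_measure_axioms prob_space_imp_sigma_finite prob_space_axioms)
  define q where "q \<tau> = indicator {0..1::real} \<tau> * p \<tau>" for \<tau>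
  have q: "integrable lborel q" using p by (simp add: set_integrable_def q_def[abs_def])
  have qm[measurable]: "q \<in> borel_measurable lborel" using q by auto
  have q2: "integrable lborel (\<lambda>\<tau>. q \<tau> * \<tau>)"
  proof (rule Bochner_Integration.integrable_bound[OF q])
    show "(\<lambda>\<tau>. q \<tau> * \<tau>) \<in> borel_measurable lborel" by measurable
    show "AE x in lborel. norm (q x * x) \<le> norm (q x)"
      by (auto simp: q_def indicator_def abs_mult intro!: mult_left_le)
  qed
  have pos: "t0 + h * \<tau> \<ge> 0" if "\<tau> \<in> {0..1}" for \<tau>
  proof -
    have "t0 + h * \<tau> = (1 - \<tau>) * t0 + \<tau> * (t0 + h)" by (simp add: algebra_simps)
    moreover have "0 \<le> (1 - \<tau>) * t0 + \<tau> * (t0 + h)" using that t0 mult_nonneg_nonneg[of "1 - \<tau>" t0] mult_nonneg_nonneg[of \<tau> "t0 + h"] by auto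
    ultimately show ?thesis by simp
  qed
  define F where "F x = q (fst x) * W (t0 + h * fst x) (snd x)" for x
  have F_alt: "F x = q (fst x) * W (max 0 (t0 + h * fst x)) (snd x)" for x
    using pos[of "fst x"] by (cases "fst x \<in> {0..1}") (auto simp: F_def q_def max_absorb2)
  have Fm[measurable]: "F \<in> borel_measurable (lborel \<Otimes>\<^sub>M M)"
  proof -
    have J: "(\<lambda>x. W (max 0 (fst x)) (snd x)) \<in> borel_measurable (borel \<Otimes>\<^sub>M M)"
      by (rule pp_joint[OF P])
    have "(\<lambda>x::real\<times>'a. (t0 + h * fst x, snd x)) \<in> measurable (lborel \<Otimes>\<^sub>M M) (borel \<Otimes>\<^sub>M M)"
      by measurable
    from measurable_compose[OF this J]
    have "(\<lambda>x::real\<times>'a. W (max 0 (t0 + h * fst x)) (snd x)) \<in> borel_measurable (lborel \<Otimes>\<^sub>M M)"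
      by simp
    then show ?thesis unfolding F_alt[abs_def] by measurable
  qed
  have inner_all: "(\<integral>\<omega>. F (\<tau>, \<omega>) \<partial>M) = q \<tau> * (\<nu> * (t0 + h * \<tau>))
     \<and> integrable M (\<lambda>\<omega>. F (\<tau>, \<omega>))
     \<and> (\<integral>\<omega>. norm (F (\<tau>, \<omega>)) \<partial>M) = norm (q \<tau>) * (\<nu> * (t0 + h * \<tau>))" for \<tau>
  proof (cases "\<tau> \<in> {0..1}")
    case True
    note E = pp_expect[OF P pos[OF True]]
    have nn: "\<omega> \<in> space M \<Longrightarrow> \<bar>F (\<tau>, \<omega>)\<bar> = \<bar>q \<tau>\<bar> * W (t0 + h * \<tau>) \<omega>" for \<omega>
      using pp_basic(4)[OF P pos[OF True]] by (simp add: F_def abs_mult)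
    have 1: "(\<integral>\<omega>. F (\<tau>, \<omega>) \<partial>M) = q \<tau> * (\<nu> * (t0 + h * \<tau>))"
      using E by (simp add: F_def)
    have 2: "integrable M (\<lambda>\<omega>. F (\<tau>, \<omega>))"
      using E by (simp add: F_def)
    have "(\<integral>\<omega>. norm (F (\<tau>, \<omega>)) \<partial>M) = (\<integral>\<omega>. norm (q \<tau>) * W (t0 + h * \<tau>) \<omega> \<partial>M)"
      by (rule Bochner_Integration.integral_cong) (auto simp: nn)
    then have 3: "(\<integral>\<omega>. norm (F (\<tau>, \<omega>)) \<partial>M) = norm (q \<tau>) * (\<nu> * (t0 + h * \<tau>))"
      using E by simp
    show ?thesis using 1 2 3 by blast
  next
    case False
    then have "q \<tau> = 0" by (simp add: q_def)
    then show ?thesis by (simp add: F_def)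
  qed
  note inner = inner_all[THEN conjunct1] inner_all[THEN conjunct2, THEN conjunct1] inner_all[THEN conjunct2, THEN conjunct2]
  have aq: "norm (q \<tau>) * (\<nu> * (t0 + h * \<tau>)) = (\<nu> * t0) * norm (q \<tau>) + (\<nu> * h) * norm (q \<tau> * \<tau>)" for \<tau>
    by (cases "\<tau> \<in> {0..1}") (auto simp: q_def abs_mult algebra_simps)
  have Fint: "integrable (lborel \<Otimes>\<^sub>M M) F"
  proof (rule PS.Fubini_integrable[OF Fm])
    show "integrable lborel (\<lambda>x. \<integral>y. norm (F (x, y)) \<partial>M)"
      unfolding inner(3) aq using integrable_norm[OF q] integrable_norm[OF q2]
      by (intro Bochner_Integration.integrable_add integrable_mult_right) auto
    show "AE x in lborel. integrable M (\<lambda>y. F (x, y))" using inner(2) by simp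
  qed
  have "(\<integral>\<omega>. noise_err p W h t0 \<omega> \<partial>M) = (\<integral>\<omega>. (\<integral>\<tau>. F (\<tau>, \<omega>) \<partial>lborel) \<partial>M)"
    by (simp add: noise_err_def set_lebesgue_integral_def F_def q_def mult.assoc)
  also have "\<dots> = (\<integral>\<tau>. (\<integral>\<omega>. F (\<tau>, \<omega>) \<partial>M) \<partial>lborel)"
    using PS.Fubini_integral[of "\<lambda>\<tau> \<omega>. F (\<tau>, \<omega>)"] Fint by simp
  also have "\<dots> = (\<integral>\<tau>. (\<nu> * t0) * q \<tau> + (\<nu> * h) * (q \<tau> * \<tau>) \<partial>lborel)"
    unfolding inner(1) by (simp add: algebra_simps)
  also have "\<dots> = (\<nu> * t0) * (\<integral>\<tau>. q \<tau> \<partial>lborel) + (\<nu> * h) * (\<integral>\<tau>. q \<tau> * \<tau> \<partial>lborel)"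
    using q q2 by simp
  also have "(\<integral>\<tau>. q \<tau> \<partial>lborel) = integral {0..1} p"
    using set_borel_integral_eq_integral(2)[OF p] by (simp add: set_lebesgue_integral_def q_def)
  also have "(\<integral>\<tau>. q \<tau> * \<tau> \<partial>lborel) = integral {0..1} (\<lambda>\<tau>. \<tau> * p \<tau>)"
  proof -
    have si: "set_integrable lborel {0..1} (\<lambda>\<tau>. \<tau> * p \<tau>)"
      using q2 by (simp add: set_integrable_def q_def mult_ac)
    show ?thesis
      using set_borel_integral_eq_integral(2)[OF si] by (simp add: set_lebesgue_integral_def q_def mult_ac)
  qed
  finally show ?thesis by (simp add: algebra_simps)
qed

lemma zero_int:
  fixes \<phi> \<psi> :: "real \<Rightarrow> real"
  assumes "continuous_on {0..1} \<phi>" "\<phi> 0 = 0" "\<phi> 1 = 0"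
    "\<And>s. s \<in> {0<..<1} \<Longrightarrow> (\<phi> has_real_derivative \<psi> s) (at s)"
  shows "(\<psi> has_integral 0) {0..1}"
proof -
  have "(\<psi> has_integral (\<phi> 1 - \<phi> 0)) {0..1}"
    by (rule fundamental_theorem_of_calculus_interior)
      (use assms in \<open>auto simp: has_real_derivative_iff_has_vector_derivative\<close>)
  then show ?thesis using assms by simp
qed

lemma bound_int:
  fixes g :: "real \<Rightarrow> real"
  assumes e: "e > -1" and d: "d > -1" and g: "continuous_on {0..1} g"
  shows "set_integrable lborel {0..1} (\<lambda>t. t powr e * (1 - t) powr d * g t)"
proof -
  have "compact (g ` {0..1})" by (rule compact_continuous_image[OF g]) simp
  then obtain B where B: "\<And>t. t \<in> {0..1} \<Longrightarrow> \<bar>g t\<bar> \<le> B"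
    by (metis bounded_iff compact_imp_bounded image_eqI real_norm_def)
  have "set_integrable lborel {0..1} (\<lambda>t. t powr (e + 1 - 1) * (1 - t) powr (d + 1 - 1))"
    by (rule integrable_Beta) (use e d in auto)
  then have I: "integrable lborel (\<lambda>t. indicator {0..1} t * (t powr e * (1 - t) powr d))"
    by (simp add: set_integrable_def)
  have gm: "(\<lambda>t. indicator {0..1} t *\<^sub>R g t) \<in> borel_measurable borel"
    by (rule borel_measurable_continuous_on_indicator[OF _ g]) simp
  show ?thesis unfolding set_integrable_def
  proof (rule Bochner_Integration.integrable_bound[OF integrable_mult_right[OF I, of B]])
    have "(\<lambda>t. t powr e * (1 - t) powr d * (indicator {0..1} t *\<^sub>R g t)) \<in> borel_measurable lborel"
      using gm by measurable
    then show "(\<lambda>t. indicator {0..1} t *\<^sub>R (t powr e * (1 - t) powr d * g t)) \<in> borel_measurable lborel"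
      by (simp add: mult_ac)
    show "AE x in lborel. norm (indicator {0..1} x *\<^sub>R (x powr e * (1 - x) powr d * g x))
        \<le> norm (B * (indicator {0..1} x * (x powr e * (1 - x) powr d)))"
    proof (intro AE_I2)
      fix x :: real
      show "norm (indicator {0..1} x *\<^sub>R (x powr e * (1 - x) powr d * g x))
        \<le> norm (B * (indicator {0..1} x * (x powr e * (1 - x) powr d)))"
      proof (cases "x \<in> {0..1}")
        case True
        have "\<bar>x powr e * (1 - x) powr d * g x\<bar> = x powr e * (1 - x) powr d * \<bar>g x\<bar>"
          by (simp add: abs_mult)
        also have "\<dots> \<le> x powr e * (1 - x) powr d * B"
          by (intro mult_left_mono B True) simp
        also have "\<dots> \<le> \<bar>B * (x powr e * (1 - x) powr d)\<bar>"
          by (simp add: abs_mult mult_ac mult_right_mono)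
        finally show ?thesis using True by simp
      qed simp
    qed
  qed
qed

lemma cont_pp:
  fixes g :: "real \<Rightarrow> real"
  assumes e: "e > 0" and d: "d > 0" and g: "continuous_on {0..1} g"
  shows "continuous_on {0..1} (\<lambda>t. t powr e * (1 - t) powr d * g t)"
  using e d by (intro continuous_intros continuous_on_powr' g) auto

definition step :: "real \<Rightarrow> real \<Rightarrow> real poly \<Rightarrow> real poly" where
  "step E D Q = [:E, -E:] * Q + smult (-D) [:0, 1:] * Q + [:0, 1, -1:] * pderiv Q"

lemma deriv_pp:
  assumes s: "s \<in> {0<..<1::real}"
  shows "((\<lambda>s. s powr E * (1 - s) powr D * poly Q s) has_real_derivative
           s powr (E - 1) * (1 - s) powr (D - 1) * poly (step E D Q) s) (at s)"
proof -
  from s have s0: "s > 0" and s1: "1 - s > 0" by auto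
  have "((\<lambda>s. s powr E * (1 - s) powr D * poly Q s) has_real_derivative
      (E * s powr (E - 1) * (1 - s) powr D + s powr E * (D * (1 - s) powr (D - 1) * (0 - 1))) * poly Q s
        + s powr E * (1 - s) powr D * poly (pderiv Q) s) (at s)"
    using s0 s1
    by (intro derivative_eq_intros DERIV_mult has_real_derivative_powr poly_DERIV
          DERIV_chain2[OF has_real_derivative_powr]) auto
  moreover have "s powr E = s powr (E - 1) * s" using s0 by (simp add: powr_diff)
  moreover have "(1 - s) powr D = (1 - s) powr (D - 1) * (1 - s)" using s1 by (simp add: powr_diff)
  ultimately show ?thesis
    by (simp add: step_def algebra_simps)
qed

lemma zero_int_poly:
  assumes e: "e > -1" and d: "d > -1"
  shows "((\<lambda>t. t powr e * (1 - t) powr d * poly (step (e + 1) (d + 1) Q) t) has_integral 0) {0..1}"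
proof (rule zero_int[where \<phi> = "\<lambda>t. t powr (e + 1) * (1 - t) powr (d + 1) * poly Q t"])
  show "continuous_on {0..1} (\<lambda>t. t powr (e + 1) * (1 - t) powr (d + 1) * poly Q t)"
    by (rule cont_pp) (use e d in \<open>auto intro: continuous_intros\<close>)
  show "(\<lambda>t. t powr (e + 1) * (1 - t) powr (d + 1) * poly Q t) 0 = 0" by simp
  show "(\<lambda>t. t powr (e + 1) * (1 - t) powr (d + 1) * poly Q t) 1 = 0" by simp
  fix s :: real assume "s \<in> {0<..<1}"
  from deriv_pp[OF this, of "e + 1" "d + 1" Q]
  show "((\<lambda>t. t powr (e + 1) * (1 - t) powr (d + 1) * poly Q t) has_real_derivative
      s powr e * (1 - s) powr d * poly (step (e + 1) (d + 1) Q) s) (at s)" by simp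
qed

lemma min_kernel_props:
  assumes e: "e > -1" and d: "d > -1" and h: "h \<noteq> 0"
  shows "set_integrable lborel {0..1} (min_kernel d e h)"
        "integral {0..1} (min_kernel d e h) = 0"
        "integral {0..1} (\<lambda>\<tau>. \<tau> * min_kernel d e h \<tau>) = 1 / h"
proof -
  define C where "C = Gamma (d + e + 4) / (Gamma (e + 2) * Gamma (d + 2))"
  define K where "K = 1 / h * C"
  define w where "w t = t powr e * (1 - t) powr d" for t :: real
  have mk: "min_kernel d e h t = K * (w t * ((d + e + 2) * t - (e + 1)))" for t
    by (simp add: min_kernel_def K_def C_def w_def mult_ac)
  show "set_integrable lborel {0..1} (min_kernel d e h)"
  proof -
    have "set_integrable lborel {0..1} (\<lambda>t. t powr e * (1 - t) powr d * (K * ((d + e + 2) * t - (e + 1))))"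
      by (rule bound_int[OF e d]) (intro continuous_intros)
    moreover have "min_kernel d e h = (\<lambda>t. t powr e * (1 - t) powr d * (K * ((d + e + 2) * t - (e + 1))))"
      by (rule ext) (simp add: mk w_def mult_ac)
    ultimately show ?thesis by simp
  qed
  have A: "((\<lambda>t. w t * ((d + e + 2) * t - (e + 1))) has_integral 0) {0..1}"
  proof -
    have p: "poly (step (e + 1) (d + 1) [:-1:]) t = (d + e + 2) * t - (e + 1)" for t
      by (simp add: step_def algebra_simps)
    show ?thesis using zero_int_poly[OF e d, of "[:-1:]"] by (simp add: p w_def)
  qed
  have B: "((\<lambda>t. w t * (t * ((d + e + 2) * t - (e + 1)) - t * (1 - t))) has_integral 0) {0..1}"
  proof -
    have p: "poly (step (e + 1) (d + 1) [:0, -1:]) t = t * ((d + e + 2) * t - (e + 1)) - t * (1 - t)" for t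
      by (simp add: step_def pderiv_pCons) (simp add: algebra_simps)
    show ?thesis using zero_int_poly[OF e d, of "[:0, -1:]"] by (simp add: p w_def)
  qed
  have Cb: "((\<lambda>t. w t * (t * (1 - t))) has_integral Beta (e + 2) (d + 2)) {0..1}"
  proof -
    have "((\<lambda>t. t powr (e + 2 - 1) * (1 - t) powr (d + 2 - 1)) has_integral Beta (e + 2) (d + 2)) {0..1}"
      by (rule has_integral_Beta_real) (use e d in auto)
    moreover have "t powr (e + 2 - 1) * (1 - t) powr (d + 2 - 1) = w t * (t * (1 - t))" if "t \<in> {0..1}" for t
    proof -
      have "t powr (e + 2 - 1) = t powr (e + 1)" "(1 - t) powr (d + 2 - 1) = (1 - t) powr (d + 1)"
        by (simp_all add: algebra_simps)
      moreover have "t powr (e + 1) = t powr e * t" using that by (simp add: powr_add)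
      moreover have "(1 - t) powr (d + 1) = (1 - t) powr d * (1 - t)" using that by (simp add: powr_add)
      ultimately show ?thesis by (simp add: w_def mult_ac)
    qed
    ultimately show ?thesis
      using has_integral_cong[of "{0..1::real}" "\<lambda>t. t powr (e + 2 - 1) * (1 - t) powr (d + 2 - 1)"
          "\<lambda>t. w t * (t * (1 - t))"] by blast
  qed
  have T: "((\<lambda>t. w t * (t * ((d + e + 2) * t - (e + 1)))) has_integral Beta (e + 2) (d + 2)) {0..1}"
    using has_integral_add[OF B Cb] by (simp add: algebra_simps)
  show "integral {0..1} (min_kernel d e h) = 0"
    unfolding mk[abs_def] by (rule integral_unique) (use has_integral_mult_right[OF A, of K] in simp)
  have "((\<lambda>\<tau>. \<tau> * min_kernel d e h \<tau>) has_integral K * Beta (e + 2) (d + 2)) {0..1}"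
    using has_integral_mult_right[OF T, of K] by (simp add: mk mult_ac)
  moreover have "K * Beta (e + 2) (d + 2) = 1 / h"
  proof -
    have g1: "Gamma (e + 2) \<noteq> 0" "Gamma (d + 2) \<noteq> 0" "Gamma (d + e + 4) \<noteq> 0"
      using e d by (auto intro!: Gamma_real_pos[THEN less_imp_neq, THEN not_sym])
    have "e + 2 + (d + 2) = d + e + 4" by simp
    then show ?thesis using g1 by (simp add: K_def C_def Beta_def field_simps)
  qed
  ultimately show "integral {0..1} (\<lambda>\<tau>. \<tau> * min_kernel d e h \<tau>) = 1 / h"
    by (simp add: integral_unique)
qed

fun qseq :: "real \<Rightarrow> real \<Rightarrow> real poly \<Rightarrow> nat \<Rightarrow> real poly" where
  "qseq b a q0 0 = q0"
| "qseq b a q0 (Suc k) = step (b - real k) (a - real k) (qseq b a q0 k)"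

lemma deriv_iter:
  assumes f: "\<And>s. s \<in> {0<..<1} \<Longrightarrow> f s = s powr b * (1 - s) powr a * poly q0 s"
  shows "s \<in> {0<..<1} \<Longrightarrow>
     (deriv ^^ k) f s = s powr (b - real k) * (1 - s) powr (a - real k) * poly (qseq b a q0 k) s"
proof (induction k arbitrary: s)
  case 0
  then show ?case using f by simp
next
  case (Suc k)
  have "((\<lambda>s. s powr (b - real k) * (1 - s) powr (a - real k) * poly (qseq b a q0 k) s) has_real_derivative
     s powr (b - real k - 1) * (1 - s) powr (a - real k - 1) * poly (qseq b a q0 (Suc k)) s) (at s)"
    using deriv_pp[OF Suc.prems] by simp
  then have "((deriv ^^ k) f has_real_derivative
     s powr (b - real k - 1) * (1 - s) powr (a - real k - 1) * poly (qseq b a q0 (Suc k)) s) (at s)"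
    by (rule has_field_derivative_transform_within_open[OF _ _ Suc.prems])
       (use Suc.IH in auto)
  then have "deriv ((deriv ^^ k) f) s = s powr (b - real k - 1) * (1 - s) powr (a - real k - 1) * poly (qseq b a q0 (Suc k)) s"
    by (rule DERIV_imp_deriv)
  then show ?case by (simp add: algebra_simps)
qed

lemma step_shift:
  "poly (step E D ([:0, 1:] * Q)) t = t * poly (step E D Q) t + t * (1 - t) * poly Q t"
  by (simp add: step_def pderiv_mult pderiv_pCons algebra_simps)

lemma jac_term:
  fixes Q :: "real poly" and m :: nat
  assumes e: "e > -1" and d: "d > -1"
  defines "J \<equiv> \<lambda>s. s powr e * (1 - s) powr d * poly (qseq (e + real (Suc (Suc m))) (d + real (Suc (Suc m))) Q (Suc (Suc m))) s"
  shows "set_integrable lborel {0..1} J" "(J has_integral 0) {0..1}" "((\<lambda>s. s * J s) has_integral 0) {0..1}"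
proof -
  define b where "b = e + real (Suc (Suc m))"
  define a where "a = d + real (Suc (Suc m))"
  define Q1 where "Q1 = qseq b a Q (Suc m)"
  have Jq: "J = (\<lambda>s. s powr e * (1 - s) powr d * poly (step (e + 1) (d + 1) Q1) s)"
    unfolding J_def Q1_def a_def b_def by (simp add: algebra_simps)
  show "set_integrable lborel {0..1} J"
    unfolding J_def by (rule bound_int[OF e d]) (intro continuous_intros)
  show J0: "(J has_integral 0) {0..1}" unfolding Jq by (rule zero_int_poly[OF e d])
  have Q1s: "Q1 = step (e + 1 + 1) (d + 1 + 1) (qseq b a Q m)"
    unfolding Q1_def a_def b_def by (simp add: algebra_simps)
  have G0: "((\<lambda>s. s powr (e + 1) * (1 - s) powr (d + 1) * poly Q1 s) has_integral 0) {0..1}"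
    unfolding Q1s by (rule zero_int_poly) (use e d in auto)
  have G0': "((\<lambda>s. s powr e * (1 - s) powr d * (s * (1 - s) * poly Q1 s)) has_integral 0) {0..1}"
  proof -
    have "s powr (e + 1) * (1 - s) powr (d + 1) * poly Q1 s = s powr e * (1 - s) powr d * (s * (1 - s) * poly Q1 s)"
      if "s \<in> {0..1}" for s
    proof -
      have "s powr (e + 1) = s powr e * s" using that by (simp add: powr_add)
      moreover have "(1 - s) powr (d + 1) = (1 - s) powr d * (1 - s)" using that by (simp add: powr_add)
      ultimately show ?thesis by (simp add: mult_ac)
    qed
    then show ?thesis
      using G0 has_integral_cong[of "{0..1::real}" "\<lambda>s. s powr (e + 1) * (1 - s) powr (d + 1) * poly Q1 s"
          "\<lambda>s. s powr e * (1 - s) powr d * (s * (1 - s) * poly Q1 s)"] by blast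
  qed
  have H0: "((\<lambda>s. s powr e * (1 - s) powr d * poly (step (e + 1) (d + 1) ([:0, 1:] * Q1)) s) has_integral 0) {0..1}"
    by (rule zero_int_poly[OF e d])
  have "((\<lambda>s. s powr e * (1 - s) powr d * poly (step (e + 1) (d + 1) ([:0, 1:] * Q1)) s
          - s powr e * (1 - s) powr d * (s * (1 - s) * poly Q1 s)) has_integral 0 - 0) {0..1}"
    by (rule has_integral_diff[OF H0 G0'])
  then show "((\<lambda>s. s * J s) has_integral 0) {0..1}"
    unfolding Jq step_shift by (simp add: algebra_simps)
qed

definition jq :: "nat \<Rightarrow> real \<Rightarrow> real \<Rightarrow> real poly" where
  "jq k a b = (\<Sum>s=0..k. smult (((real k + a) gchoose s) * ((real k + b) gchoose (k - s)))
                 ([:-1, 1:] ^ (k - s) * [:0, 1:] ^ s))"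

lemma poly_jq: "poly (jq k a b) t = jacP k a b t"
  by (simp add: jq_def jacP_def poly_sum poly_monom mult_ac)

lemma si_transfer:
  fixes p q :: "real \<Rightarrow> real"
  assumes q: "set_integrable lborel {0..1} q" and eq: "\<And>x. x \<in> {0<..<1} \<Longrightarrow> p x = q x"
  shows "set_integrable lborel {0..1} p"
proof -
  have q': "integrable lborel (\<lambda>x. indicator {0..1} x * q x)" using q by (simp add: set_integrable_def)
  have "(\<lambda>x. indicator {0..1} x * p x) = (\<lambda>x. indicator {0<..<1} x *\<^sub>R (indicator {0..1} x * q x)
          + indicator {0} x *\<^sub>R p 0 + indicator {1} x *\<^sub>R p 1)"
    by (rule ext) (auto simp: indicator_def eq)
  moreover have "integrable lborel (\<lambda>x. indicator {0<..<1::real} x *\<^sub>R (indicator {0..1} x * q x)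
          + indicator {0} x *\<^sub>R p 0 + indicator {1} x *\<^sub>R p 1)"
    by (intro Bochner_Integration.integrable_add integrable_mult_indicator q' integrable_indicator) auto
  ultimately show ?thesis by (simp add: set_integrable_def)
qed

lemma hk_transfer:
  fixes p q :: "real \<Rightarrow> real"
  assumes "(q has_integral y) {0..1}" and eq: "\<And>x. x \<in> {0<..<1} \<Longrightarrow> p x = q x"
  shows "(p has_integral y) {0..1}"
proof (rule has_integral_spike[OF _ _ assms(1)])
  show "negligible {0, 1::real}" by auto
  show "x \<in> {0..1} - {0, 1} \<Longrightarrow> p x = q x" for x using eq by auto
qed

lemma jacobi_props:
  assumes k: "\<kappa> > -1" and mu: "\<mu> > -1" and n: "2 \<le> n"
  shows "set_integrable lborel {0..1} (jacobi_kernel \<mu> \<kappa> h n N \<xi>)"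
        "integral {0..1} (jacobi_kernel \<mu> \<kappa> h n N \<xi>) = 0"
        "integral {0..1} (\<lambda>\<tau>. \<tau> * jacobi_kernel \<mu> \<kappa> h n N \<xi> \<tau>) = 0"
proof -
  obtain m where nm: "n = Suc (Suc m)" using n by (metis add_2_eq_Suc le_Suc_ex)
  define a where "a = \<mu> + real n"
  define b where "b = \<kappa> + real n"
  define c where "c i = jacP i a b \<xi> / jac_norm2 i a b" for i
  define J where "J i s = s powr \<kappa> * (1 - s) powr \<mu> *
     poly (qseq (\<kappa> + real (Suc (Suc m))) (\<mu> + real (Suc (Suc m))) (jq i a b) (Suc (Suc m))) s" for i s
  define K where "K = (-1) ^ n / h ^ n"
  define ks where "ks s = K * (\<Sum>i=0..N - n. c i * J i s)" for s
  have eq: "jacobi_kernel \<mu> \<kappa> h n N \<xi> s = ks s" if s: "s \<in> {0<..<1}" for s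
  proof -
    have "(deriv ^^ n) (\<lambda>s. jw a b s * jacP i a b s) s = J i s" for i
    proof -
      have "(deriv ^^ n) (\<lambda>s. jw a b s * jacP i a b s) s
          = s powr (b - real n) * (1 - s) powr (a - real n) * poly (qseq b a (jq i a b) n) s"
        by (rule deriv_iter[OF _ s]) (simp add: jw_def poly_jq)
      then show ?thesis by (simp add: J_def a_def b_def nm)
    qed
    then show ?thesis
      unfolding jacobi_kernel_def ks_def K_def c_def a_def b_def by simp
  qed
  have Jp: "set_integrable lborel {0..1} (J i)" "(J i has_integral 0) {0..1}"
     "((\<lambda>s. s * J i s) has_integral 0) {0..1}" for i
    using jac_term[OF k mu, of m "jq i a b"] unfolding J_def by auto
  have ksi: "set_integrable lborel {0..1} ks"
  proof -
    have "integrable lborel (\<lambda>s. \<Sum>i=0..N - n. K * c i * (indicator {0..1} s * J i s))"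
      using Jp(1) by (intro Bochner_Integration.integrable_sum integrable_mult_right) (auto simp: set_integrable_def)
    then show ?thesis
      by (simp add: set_integrable_def ks_def sum_distrib_left sum_distrib_right mult_ac)
  qed
  have ks0: "(ks has_integral 0) {0..1}"
  proof -
    have "((\<lambda>s. \<Sum>i=0..N - n. K * c i * J i s) has_integral (\<Sum>i=0..N - n. K * c i * 0)) {0..1}"
      by (intro has_integral_sum has_integral_mult_right Jp(2)) auto
    then show ?thesis by (simp add: ks_def[abs_def] sum_distrib_left mult_ac)
  qed
  have ks1: "((\<lambda>s. s * ks s) has_integral 0) {0..1}"
  proof -
    have "((\<lambda>s. \<Sum>i=0..N - n. K * c i * (s * J i s)) has_integral (\<Sum>i=0..N - n. K * c i * 0)) {0..1}"
      by (intro has_integral_sum has_integral_mult_right Jp(3)) auto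
    then show ?thesis by (simp add: ks_def sum_distrib_left mult_ac)
  qed
  show "set_integrable lborel {0..1} (jacobi_kernel \<mu> \<kappa> h n N \<xi>)"
    by (rule si_transfer[OF ksi eq])
  show "integral {0..1} (jacobi_kernel \<mu> \<kappa> h n N \<xi>) = 0"
    by (rule integral_unique, rule hk_transfer[OF ks0 eq])
  show "integral {0..1} (\<lambda>\<tau>. \<tau> * jacobi_kernel \<mu> \<kappa> h n N \<xi> \<tau>) = 0"
    by (rule integral_unique, rule hk_transfer[OF ks1]) (simp add: eq)
qed

lemma min_kernel_hk:
  assumes e: "e > -1" and d: "d > -1" and h: "h \<noteq> 0"
  shows "(min_kernel d e h has_integral 0) {0..1}"
        "((\<lambda>\<tau>. \<tau> * min_kernel d e h \<tau>) has_integral 1 / h) {0..1}"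
proof -
  note P = min_kernel_props[OF e d h]
  have i1: "min_kernel d e h integrable_on {0..1}" by (rule set_borel_integral_eq_integral(1)[OF P(1)])
  have "set_integrable lborel {0..1} (\<lambda>\<tau>. \<tau> * min_kernel d e h \<tau>)"
  proof -
    have "integrable lborel (\<lambda>\<tau>. indicator {0..1} \<tau> * min_kernel d e h \<tau> * \<tau>)"
    proof (rule Bochner_Integration.integrable_bound)
      show "integrable lborel (\<lambda>\<tau>. indicator {0..1} \<tau> * min_kernel d e h \<tau>)"
        using P(1) by (simp add: set_integrable_def)
      then have "(\<lambda>\<tau>. indicator {0..1} \<tau> * min_kernel d e h \<tau>) \<in> borel_measurable lborel" by auto
      then show "(\<lambda>\<tau>. indicator {0..1} \<tau> * min_kernel d e h \<tau> * \<tau>) \<in> borel_measurable lborel" by measurable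
      show "AE x in lborel. norm (indicator {0..1} x * min_kernel d e h x * x) \<le> norm (indicator {0..1} x * min_kernel d e h x)"
        by (auto simp: indicator_def abs_mult intro!: mult_left_le)
    qed
    then show ?thesis by (simp add: set_integrable_def mult_ac)
  qed
  then have i2: "(\<lambda>\<tau>. \<tau> * min_kernel d e h \<tau>) integrable_on {0..1}"
    by (rule set_borel_integral_eq_integral(1))
  show "(min_kernel d e h has_integral 0) {0..1}" using integrable_integral[OF i1] P(2) by simp
  show "((\<lambda>\<tau>. \<tau> * min_kernel d e h \<tau>) has_integral 1 / h) {0..1}"
    using integrable_integral[OF i2] P(3) by simp
qed

theorem proposition4:
  fixes I :: "real set" and \<beta> T t0 \<kappa> \<mu> \<nu> :: real
    and M :: "'a measure" and W :: "real \<Rightarrow> 'a \<Rightarrow> real"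
  assumes "open I" and "is_interval I" and "I \<subseteq> {0..}"
    and "\<beta> \<in> {-1, 1}" and "t0 \<in> I" and "T > 0" and "t0 + \<beta> * T \<in> I"
    and "\<kappa> > -1" and "\<mu> > -1"
    and "poisson_process M \<nu> W"
  shows "(\<forall>n N \<xi>. 2 \<le> n \<and> n \<le> N \<and> \<xi> \<in> {0..1} \<longrightarrow>
            (\<integral>\<omega>. noise_err (jacobi_kernel \<mu> \<kappa> (\<beta> * T) n N \<xi>) W (\<beta> * T) t0 \<omega> \<partial>M) = 0)
       \<and> (\<integral>\<omega>. noise_err (min_kernel \<mu> \<kappa> (\<beta> * T)) W (\<beta> * T) t0 \<omega> \<partial>M) = \<nu>
       \<and> (\<forall>\<xi>\<in>{0..1}.
            (\<integral>\<omega>. noise_err (aff_kernel \<mu> \<kappa> (\<beta> * T) \<xi>) W (\<beta> * T) t0 \<omega> \<partial>M) = \<nu>)"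
proof -
  define h where "h = \<beta> * T"
  have P: "poisson_process M \<nu> W" by fact
  have t0: "t0 \<ge> 0" "t0 + h \<ge> 0" using assms(3,5,7) by (auto simp: h_def)
  have h: "h \<noteq> 0" using assms(4,6) by (auto simp: h_def)
  have k: "\<kappa> > -1" and mu: "\<mu> > -1" by fact+
  have A: "(\<integral>\<omega>. noise_err (jacobi_kernel \<mu> \<kappa> h n N \<xi>) W h t0 \<omega> \<partial>M) = 0" if "2 \<le> n" for n N \<xi>
    using pp_noise_expect[OF P t0 jacobi_props(1)[OF k mu that]] jacobi_props(2,3)[OF k mu that] by simp
  have B: "(\<integral>\<omega>. noise_err (min_kernel \<mu> \<kappa> h) W h t0 \<omega> \<partial>M) = \<nu>"
    using pp_noise_expect[OF P t0 min_kernel_props(1)[OF k mu h]] min_kernel_props(2,3)[OF k mu h] h by simp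
  have C: "(\<integral>\<omega>. noise_err (aff_kernel \<mu> \<kappa> h \<xi>) W h t0 \<omega> \<partial>M) = \<nu>" for \<xi>
  proof -
    define l1 where "l1 = (\<kappa> + 3) - (\<mu> + \<kappa> + 5) * \<xi>"
    have ak: "aff_kernel \<mu> \<kappa> h \<xi> = (\<lambda>\<tau>. l1 * min_kernel (\<mu> + 1) \<kappa> h \<tau> + (1 - l1) * min_kernel \<mu> (\<kappa> + 1) h \<tau>)"
      by (rule ext) (simp add: aff_kernel_def l1_def Let_def)
    have mu1: "\<mu> + 1 > -1" and k1: "\<kappa> + 1 > -1" using k mu by auto
    have si: "set_integrable lborel {0..1} (aff_kernel \<mu> \<kappa> h \<xi>)"
      unfolding ak using min_kernel_props(1)[OF k mu1 h] min_kernel_props(1)[OF k1 mu h]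
      by (intro set_integral_add(1) set_integrable_mult_right) auto
    note H1 = min_kernel_hk[OF k mu1 h] and H2 = min_kernel_hk[OF k1 mu h]
    have "(aff_kernel \<mu> \<kappa> h \<xi> has_integral (l1 * 0 + (1 - l1) * 0)) {0..1}"
      unfolding ak by (intro has_integral_add has_integral_mult_right H1(1) H2(1))
    then have i1: "integral {0..1} (aff_kernel \<mu> \<kappa> h \<xi>) = 0" by (simp add: integral_unique)
    have "((\<lambda>\<tau>. \<tau> * aff_kernel \<mu> \<kappa> h \<xi> \<tau>) has_integral (l1 * (1 / h) + (1 - l1) * (1 / h))) {0..1}"
      using has_integral_add[OF has_integral_mult_right[OF H1(2), of l1] has_integral_mult_right[OF H2(2), of "1 - l1"]]
      unfolding ak by (simp add: algebra_simps)
    moreover have "l1 * (1 / h) + (1 - l1) * (1 / h) = 1 / h" by (simp add: add_divide_distrib[symmetric])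
    ultimately have i2: "integral {0..1} (\<lambda>\<tau>. \<tau> * aff_kernel \<mu> \<kappa> h \<xi> \<tau>) = 1 / h"
      by (metis integral_unique)
    show ?thesis using pp_noise_expect[OF P t0 si] i1 i2 h by simp
  qed
  show ?thesis using A B C unfolding h_def by auto
qed

end
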